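(* Under the hypotheses and with the sequences $(\beta_k),(\lambda_k),(x_k),(y_k)$ of the accelerated scheme (any $\lambda_0>0$), set $\beta_0=0$, $\delta_k=F(y_k)-F(x^* )$ and $u_k=\beta_k x_k-(\beta_k-1)y_k-x^*$. Then for every $k\ge1$, $$\lambda_k\beta_k^2\,\delta_{k+1}-\lambda_{k-1}\beta_{k-1}^2\,\delta_k\le\tfrac12\big(\|u_k\|^2-\|u_{k+1}\|^2\big).$$
   Context: $\mathbb{R}^d$ carries the standard inner product $\langle\cdot,\cdot\rangle$ and Euclidean norm $\|\cdot\|$. $f:\mathbb{R}^d\to\mathbb{R}$ is convex and differentiable with $L$-Lipschitz gradient, $h:\mathbb{R}^d\to\mathbb{R}\cup\{+\infty\}$ is proper, closed and convex, $F=f+h$, and $x^*$ is a minimizer of $F$. For $\lambda>0$, $\mathrm{prox}_{\lambda h}(w)=\arg\min_{u}\{\lambda h(u)+\tfrac12\|u-w\|^2\}$ and $G^{f}_{\lambda h}(x)=\frac{1}{\lambda}(x-\mathrm{prox}_{\lambda h}(x-\lambda\nabla f(x)))$. The linesearch condition $\mathrm{(LS)}(x,\lambda)$ is: with $G=G^{f}_{\lambda h}(x)$, $f(x-2\lambda G)\le f(x-\lambda G)-\lambda\langle G,\nabla f(x)\rangle+\tfrac{\lambda}{2}\|G\|^2$. Accelerated scheme: $x_1=y_1\in\mathrm{dom}\,h$, $\lambda_0>0$, $\beta_1=1$, $\beta_{k+1}=\frac{1+\sqrt{1+4\beta_k^2}}{2}$, and for $k\ge1$: $\lambda_k=\max\{\lambda\in(0,\lambda_{k-1}]:\mathrm{(LS)}(x_k,\lambda)\}$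 (assumed attained), $y_{k+1}=x_k-\lambda_kG^{f}_{\lambda_kh}(x_k)$, $x_{k+1}=y_{k+1}+\frac{\beta_k-1}{\beta_{k+1}}(y_{k+1}-y_k)$. *)

theory Defs
  imports "HOL-Analysis.Analysis" "HOL-Library.Extended_Real"
begin

definition ext_proper :: "('a \<Rightarrow> ereal) \<Rightarrow> bool" where
  "ext_proper h \<longleftrightarrow> (\<forall>x. h x \<noteq> -\<infinity>) \<and> (\<exists>x. h x \<noteq> \<infinity>)"

definition ext_closed :: "('a::topological_space \<Rightarrow> ereal) \<Rightarrow> bool" where
  "ext_closed h \<longleftrightarrow> closed {(x, t::real). h x \<le> ereal t}"

definition ext_convex :: "('a::real_vector \<Rightarrow> ereal) \<Rightarrow> bool" where
  "ext_convex h \<longleftrightarrow> (\<forall>x y (t::real). 0 \<le> t \<and> t \<le> 1 \<longrightarrow>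
      h ((1 - t) *\<^sub>R x + t *\<^sub>R y) \<le> ereal (1 - t) * h x + ereal t * h y)"

definition edom :: "('a \<Rightarrow> ereal) \<Rightarrow> 'a set" where
  "edom h = {x. h x < \<infinity>}"

definition prox :: "real \<Rightarrow> ('a::real_normed_vector \<Rightarrow> ereal) \<Rightarrow> 'a \<Rightarrow> 'a" where
  "prox lam h w = (SOME u. \<forall>v. ereal lam * h u + ereal ((norm (u - w))\<^sup>2 / 2)
                              \<le> ereal lam * h v + ereal ((norm (v - w))\<^sup>2 / 2))"

definition gradmap :: "('a::real_normed_vector \<Rightarrow> 'a) \<Rightarrow> ('a \<Rightarrow> ereal) \<Rightarrow> real \<Rightarrow> 'a \<Rightarrow> 'a" where
  "gradmap gradf h lam x = (1 / lam) *\<^sub>R (x - prox lam h (x - lam *\<^sub>R gradf x))"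

definition LS :: "('a::real_inner \<Rightarrow> real) \<Rightarrow> ('a \<Rightarrow> 'a) \<Rightarrow> ('a \<Rightarrow> ereal) \<Rightarrow> 'a \<Rightarrow> real \<Rightarrow> bool" where
  "LS f gradf h x lam \<longleftrightarrow> (let G = gradmap gradf h lam x in
     f (x - (2 * lam) *\<^sub>R G) \<le> f (x - lam *\<^sub>R G) - lam * inner G (gradf x) + lam / 2 * (norm G)\<^sup>2)"

end

theory Submission
  imports Defs
begin

lemma tangent_ineq:
  fixes f :: "'a::real_inner \<Rightarrow> real"
  assumes fconv: "convex_on UNIV f"
    and fgrad: "\<And>z. (f has_derivative (\<lambda>v. inner (gradf z) v)) (at z)"
  shows "f z \<ge> f x + inner (gradf x) (z - x)"
proof -
  define g where "g = (\<lambda>t::real. f (x + t *\<^sub>R (z - x)))"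
  have gc: "convex_on UNIV g"
  proof (rule convex_onI)
    fix t a b :: real assume "t > 0" "t < 1"
    have "x + ((1 - t) *\<^sub>R a + t *\<^sub>R b) *\<^sub>R (z - x)
       = (1 - t) *\<^sub>R (x + a *\<^sub>R (z - x)) + t *\<^sub>R (x + b *\<^sub>R (z - x))"
      by (simp add: algebra_simps)
    then show "g ((1 - t) *\<^sub>R a + t *\<^sub>R b) \<le> (1 - t) * g a + t * g b"
      unfolding g_def using convex_onD[OF fconv, of t] \<open>t > 0\<close> \<open>t < 1\<close> by simp
  qed simp
  have "((\<lambda>t. x + t *\<^sub>R (z - x)) has_derivative (\<lambda>t. t *\<^sub>R (z - x))) (at 0)"
    by (auto intro!: derivative_eq_intros)
  from has_derivative_compose[OF this fgrad]
  have "(g has_derivative (\<lambda>t. inner (gradf x) (t *\<^sub>R (z - x)))) (at 0)"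
    unfolding g_def o_def by simp
  hence "(g has_field_derivative inner (gradf x) (z - x)) (at 0 within UNIV)"
    unfolding has_field_derivative_def by (rule has_derivative_eq_rhs) (auto simp: mult.commute)
  from convex_on_imp_above_tangent[OF gc _ _ _ this, of 1]
  have "g 1 - g 0 \<ge> inner (gradf x) (z - x)" by simp
  thus ?thesis unfolding g_def by simp
qed


lemma epi_convex:
  fixes h :: "'a::euclidean_space \<Rightarrow> ereal"
  assumes hprop: "ext_proper h" and hconv: "ext_convex h"
  shows "convex {(x, t::real). h x \<le> ereal t}"
proof (rule convexI)
  fix p q :: "'a \<times> real" and u v :: real
  assume p: "p \<in> {(x, t). h x \<le> ereal t}" and q: "q \<in> {(x, t). h x \<le> ereal t}"
    and uv: "0 \<le> u" "0 \<le> v" "u + v = 1"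
  obtain x1 t1 where p': "p = (x1, t1)" "h x1 \<le> ereal t1" using p by auto
  obtain x2 t2 where q': "q = (x2, t2)" "h x2 \<le> ereal t2" using q by auto
  have u: "u = 1 - v" using uv by simp
  have "h ((1 - v) *\<^sub>R x1 + v *\<^sub>R x2) \<le> ereal (1 - v) * h x1 + ereal v * h x2"
    using hconv uv unfolding ext_convex_def by auto
  also have "\<dots> \<le> ereal (1 - v) * ereal t1 + ereal v * ereal t2"
    using uv u p'(2) q'(2) by (intro add_mono ereal_mult_left_mono) auto
  finally show "u *\<^sub>R p + v *\<^sub>R q \<in> {(x, t). h x \<le> ereal t}"
    using p' q' u by simp
qed

lemma affine_minorant:
  fixes h :: "'a::euclidean_space \<Rightarrow> ereal"
  assumes hprop: "ext_proper h" and hclosed: "ext_closed h" and hconv: "ext_convex h"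
  shows "\<exists>a c. \<forall>u. ereal (c + inner a u) \<le> h u"
proof -
  let ?E = "{(x, t::real). h x \<le> ereal t}"
  obtain x0 where "h x0 \<noteq> \<infinity>" using hprop unfolding ext_proper_def by auto
  moreover have "h x0 \<noteq> -\<infinity>" using hprop unfolding ext_proper_def by auto
  ultimately obtain r where r: "h x0 = ereal r" by (cases "h x0") auto
  have "(x0, r - 1) \<notin> ?E" using r by simp
  from separating_hyperplane_closed_point[OF epi_convex[OF hprop hconv] hclosed[unfolded ext_closed_def] this]
  obtain p b where pb: "inner p (x0, r - 1) < b" "\<forall>q\<in>?E. inner p q > b" by blast
  obtain a s where ps: "p = (a, s)" by (cases p)
  have "(x0, r) \<in> ?E" using r by simp
  hence "inner a x0 + s * r > b" using pb(2) ps by auto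
  with pb(1) ps have s: "s > 0" by (simp add: algebra_simps)
  show ?thesis
  proof (intro exI allI)
    fix u
    show "ereal (b / s + inner (- a /\<^sub>R s) u) \<le> h u"
    proof (cases "h u")
      case (real t)
      hence "(u, t) \<in> ?E" by simp
      hence "inner a u + s * t > b" using pb(2) ps by auto
      hence "b / s + inner (- a /\<^sub>R s) u \<le> t" using s by (simp add: field_simps)
      thus ?thesis using real by simp
    next
      case PInf thus ?thesis by simp
    next
      case MInf thus ?thesis using hprop unfolding ext_proper_def by auto
    qed
  qed
qed


lemma prox_exists:
  fixes h :: "'a::euclidean_space \<Rightarrow> ereal"
  assumes hprop: "ext_proper h" and hclosed: "ext_closed h" and hconv: "ext_convex h"
    and lam: "lam > 0"
  shows "\<exists>u. \<forall>v. ereal lam * h u + ereal ((norm (u - w))\<^sup>2 / 2)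
                  \<le> ereal lam * h v + ereal ((norm (v - w))\<^sup>2 / 2)"
proof -
  obtain a c where ac: "\<And>u. ereal (c + inner a u) \<le> h u"
    using affine_minorant[OF hprop hclosed hconv] by blast
  obtain x0 where "h x0 \<noteq> \<infinity>" using hprop unfolding ext_proper_def by auto
  moreover have "h x0 \<noteq> -\<infinity>" using hprop unfolding ext_proper_def by auto
  ultimately obtain r where r: "h x0 = ereal r" by (cases "h x0") auto
  define M where "M = lam * r + (norm (x0 - w))\<^sup>2 / 2"
  define g where "g = (\<lambda>p::'a \<times> real. lam * snd p + (norm (fst p - w))\<^sup>2 / 2)"
  define E where "E = {p. h (fst p) \<le> ereal (snd p) \<and> g p \<le> M}"
  define K where "K = M - lam * c - lam * inner a w"
  define A where "A = lam * norm a"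
  define R where "R = 2 * \<bar>K\<bar> + 2 * A + 1"
  define T where "T = \<bar>M\<bar> / lam + \<bar>c\<bar> + norm a * (norm w + R)"
  have A0: "A \<ge> 0" unfolding A_def using lam by simp
  have gc: "continuous_on UNIV g" unfolding g_def by (intro continuous_intros) auto
  have "closed {(x, t::real). h x \<le> ereal t}" using hclosed unfolding ext_closed_def .
  moreover have "{(x, t::real). h x \<le> ereal t} = {p. h (fst p) \<le> ereal (snd p)}" by auto
  ultimately have c1: "closed {p. h (fst p) \<le> ereal (snd p)}" by simp
  have c2: "closed {p. g p \<le> M}"
    by (rule closed_Collect_le[OF gc]) (auto intro: continuous_intros)
  have clE: "closed E" unfolding E_def using closed_Int[OF c1 c2] by (simp add: Collect_conj_eq)
  have sub: "E \<subseteq> cball w R \<times> cball 0 T"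
  proof
    fix p assume pE: "p \<in> E"
    obtain u t where p: "p = (u, t)" by (cases p)
    have ht: "h u \<le> ereal t" and gM: "lam * t + (norm (u - w))\<^sup>2 / 2 \<le> M"
      using pE p unfolding E_def g_def by auto
    have ct: "c + inner a u \<le> t" using order.trans[OF ac ht] by simp
    define n where "n = norm (u - w)"
    have n0: "n \<ge> 0" unfolding n_def by simp
    have "inner a u = inner a w + inner a (u - w)" by (simp add: inner_diff_right)
    moreover have "inner a (u - w) \<ge> - (norm a * n)"
      unfolding n_def using Cauchy_Schwarz_ineq2[of a "u - w"] by (simp add: abs_le_iff)
    ultimately have iau: "inner a u \<ge> inner a w - norm a * n" by simp
    have "lam * (c + inner a u) \<le> lam * t" using ct lam by simp
    hence "n\<^sup>2 / 2 \<le> M - lam * c - lam * inner a u" using gM unfolding n_def by (simp add: algebra_simps)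
    also have "\<dots> \<le> K + A * n"
    proof -
      have "lam * (inner a w - norm a * n) \<le> lam * inner a u" using iau lam by (simp add: mult_left_mono)
      thus ?thesis unfolding K_def A_def by (simp add: algebra_simps)
    qed
    finally have q: "n\<^sup>2 \<le> 2 * K + 2 * A * n" by simp
    have "2 * A * n \<le> 2 * A\<^sup>2 + n\<^sup>2 / 2"
      using sum_squares_ge_zero[of "2*A - n" 0] by (simp add: power2_eq_square algebra_simps)
    with q have "n\<^sup>2 \<le> 4 * \<bar>K\<bar> + 4 * A\<^sup>2" by linarith
    also have "\<dots> \<le> R\<^sup>2" unfolding R_def using A0
      by (simp add: power2_eq_square algebra_simps)
    finally have nR: "n \<le> R" using n0 unfolding R_def
      by (meson abs_ge_zero A0 add_nonneg_nonneg mult_nonneg_nonneg power2_le_imp_le zero_le_numeral zero_le_one)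
    have u1: "u \<in> cball w R" using nR unfolding n_def by (simp add: dist_norm norm_minus_commute)
    have "norm u \<le> norm w + n" unfolding n_def using norm_triangle_ineq[of w "u - w"] by simp
    hence "norm a * norm u \<le> norm a * (norm w + R)" using nR by (simp add: mult_left_mono)
    moreover have "inner a u \<ge> - (norm a * norm u)" using Cauchy_Schwarz_ineq2[of a u] by (simp add: abs_le_iff)
    ultimately have tl: "t \<ge> c - norm a * (norm w + R)" using ct by linarith
    have "lam * t \<le> M" using gM zero_le_power2[of "norm (u - w)"] by linarith
    hence "t \<le> M / lam" using lam by (simp add: field_simps)
    moreover have "M / lam \<le> \<bar>M\<bar> / lam" using lam by (simp add: divide_right_mono)
    moreover have "norm a * (norm w + R) \<ge> 0" unfolding R_def using A0 by simp
    moreover have "\<bar>M\<bar> / lam \<ge> 0" using lam by simp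
    moreover have "c \<le> \<bar>c\<bar>" "- c \<le> \<bar>c\<bar>" by auto
    ultimately have "\<bar>t\<bar> \<le> T" using tl unfolding T_def abs_le_iff by linarith
    thus "p \<in> cball w R \<times> cball 0 T" using u1 p by simp
  qed
  have cpE: "compact E"
  proof -
    have "compact ((cball w R \<times> cball 0 T) \<inter> E)"
      by (intro compact_Int_closed compact_Times compact_cball clE)
    moreover have "(cball w R \<times> cball 0 T) \<inter> E = E" using sub by blast
    ultimately show ?thesis by simp
  qed
  have x0E: "(x0, r) \<in> E" unfolding E_def g_def M_def using r by simp
  obtain p where pE: "p \<in> E" and pmin: "\<And>q. q \<in> E \<Longrightarrow> g p \<le> g q"
    using continuous_attains_inf[OF cpE _ continuous_on_subset[OF gc]] x0E by blast
  obtain us ts where p: "p = (us, ts)" by (cases p)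
  have hus: "h us \<le> ereal ts" and gpM: "g p \<le> M" using pE p unfolding E_def by auto
  have lhs: "ereal lam * h us + ereal ((norm (us - w))\<^sup>2 / 2) \<le> ereal (g p)"
  proof -
    have "ereal lam * h us \<le> ereal lam * ereal ts" using hus lam by (intro ereal_mult_left_mono) auto
    hence "ereal lam * h us + ereal ((norm (us - w))\<^sup>2 / 2) \<le> ereal (lam * ts) + ereal ((norm (us - w))\<^sup>2 / 2)"
      by (intro add_right_mono) simp
    thus ?thesis unfolding g_def p by simp
  qed
  show ?thesis
  proof (intro exI allI)
    fix v
    show "ereal lam * h us + ereal ((norm (us - w))\<^sup>2 / 2) \<le> ereal lam * h v + ereal ((norm (v - w))\<^sup>2 / 2)"
    proof (cases "h v")
      case (real s)
      have "g p \<le> lam * s + (norm (v - w))\<^sup>2 / 2"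
      proof (cases "g (v, s) \<le> M")
        case True
        hence "(v, s) \<in> E" unfolding E_def using real by simp
        from pmin[OF this] show ?thesis unfolding g_def by simp
      next
        case False thus ?thesis using gpM unfolding g_def by simp
      qed
      hence "ereal (g p) \<le> ereal lam * h v + ereal ((norm (v - w))\<^sup>2 / 2)" using real by simp
      thus ?thesis using lhs by (rule order.trans[rotated])
    next
      case PInf thus ?thesis using lam by simp
    next
      case MInf thus ?thesis using hprop unfolding ext_proper_def by auto
    qed
  qed
qed


lemma norm_add_scale_sq:
  fixes a b :: "'a::real_inner"
  shows "(norm (a + t *\<^sub>R b))\<^sup>2 = (norm a)\<^sup>2 + 2 * t * inner a b + t\<^sup>2 * (norm b)\<^sup>2"
proof -
  have "(norm (a + t *\<^sub>R b))\<^sup>2 = inner (a + t *\<^sub>R b) (a + t *\<^sub>R b)" by (rule power2_norm_eq_inner)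
  also have "\<dots> = inner a a + 2 * t * inner a b + t\<^sup>2 * inner b b"
    by (simp add: inner_add_left inner_add_right inner_commute power2_eq_square algebra_simps)
  finally show ?thesis by (simp add: power2_norm_eq_inner)
qed

lemma aux: fixes a P S t d N b :: real
  assumes 1: "a + P/2 \<le> S + (P + 2*t*d + t\<^sup>2*N)/2" and 2: "S \<le> (1-t)*a + t*b"
  shows "t*a \<le> t*(b + d + t/2*N)"
proof -
  have E: "(P + 2*t*d + t\<^sup>2*N)/2 = P/2 + t*d + t\<^sup>2*N/2" by (simp add: field_simps)
  have A: "a \<le> S + t*d + t\<^sup>2*N/2" using 1 unfolding E by linarith
  have B: "S \<le> a - t*a + t*b" using 2 by (simp add: algebra_simps)
  have C: "t*(b + d + t/2*N) = t*b + t*d + t\<^sup>2*N/2" by (simp add: algebra_simps power2_eq_square)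
  show ?thesis unfolding C using A B by linarith
qed

lemma prox_subgrad:
  fixes h :: "'a::real_inner \<Rightarrow> ereal"
  assumes hprop: "ext_proper h" and hconv: "ext_convex h" and lam: "lam > 0"
    and umin: "\<forall>v. ereal lam * h u + ereal ((norm (u - w))\<^sup>2 / 2)
                  \<le> ereal lam * h v + ereal ((norm (v - w))\<^sup>2 / 2)"
    and hu: "h u = ereal hu" and hz: "h z = ereal hz"
  shows "lam * hu \<le> lam * hz + inner (u - w) (z - u)"
proof -
  define d where "d = inner (u - w) (z - u)"
  define N where "N = (norm (z - u))\<^sup>2"
  have key: "lam * hu \<le> lam * hz + d + t / 2 * N" if t: "0 < t" "t \<le> 1" for t
  proof -
    define ut where "ut = (1 - t) *\<^sub>R u + t *\<^sub>R z"
    have "h ut \<le> ereal (1 - t) * h u + ereal t * h z"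
      using hconv t unfolding ext_convex_def ut_def by auto
    also have "\<dots> = ereal ((1 - t) * hu + t * hz)" using hu hz by simp
    finally have hut: "h ut \<le> ereal ((1 - t) * hu + t * hz)" .
    have "h ut \<noteq> -\<infinity>" using hprop unfolding ext_proper_def by auto
    with hut obtain s where s: "h ut = ereal s" "s \<le> (1 - t) * hu + t * hz"
      by (cases "h ut") auto
    have "ut - w = (u - w) + t *\<^sub>R (z - u)" unfolding ut_def by (simp add: algebra_simps)
    hence nut: "(norm (ut - w))\<^sup>2 = (norm (u - w))\<^sup>2 + 2 * t * d + t\<^sup>2 * N"
      unfolding d_def N_def using norm_add_scale_sq[of "u - w" t "z - u"] by metis
    have "ereal lam * h u + ereal ((norm (u - w))\<^sup>2 / 2) \<le> ereal lam * h ut + ereal ((norm (ut - w))\<^sup>2 / 2)"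
      using umin by blast
    hence "lam * hu + (norm (u - w))\<^sup>2 / 2 \<le> lam * s + (norm (ut - w))\<^sup>2 / 2"
      using hu s by simp
    moreover have "lam * s \<le> lam * ((1 - t) * hu + t * hz)" using s lam by simp
    ultimately have "t * (lam * hu) \<le> t * (lam * hz + d + t / 2 * N)"
      unfolding nut by (intro aux[where S="lam * s" and P="(norm (u - w))\<^sup>2"]) (auto simp: algebra_simps)
    thus ?thesis using t by simp
  qed
  show ?thesis
  proof (rule ccontr)
    assume "\<not> ?thesis"
    hence e: "lam * hu - lam * hz - d > 0" unfolding d_def by simp
    define e where "e = lam * hu - lam * hz - d"
    define t where "t = min 1 (e / (N + 1))"
    have N0: "N \<ge> 0" unfolding N_def by simp
    have t0: "t > 0" "t \<le> 1" unfolding t_def e_def using e N0 by auto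
    have "t * N \<le> e / (N + 1) * N" unfolding t_def using N0 by (intro mult_right_mono) auto
    also have "\<dots> < e" using e N0 unfolding e_def[symmetric] by (simp add: field_simps)
    finally have "t / 2 * N < e" using e_def e by simp
    with key[OF t0] show False unfolding e_def by simp
  qed
qed


lemma prox_min:
  fixes h :: "'a::euclidean_space \<Rightarrow> ereal"
  assumes hprop: "ext_proper h" and hclosed: "ext_closed h" and hconv: "ext_convex h"
    and lam: "lam > 0"
  shows "\<forall>v. ereal lam * h (prox lam h w) + ereal ((norm (prox lam h w - w))\<^sup>2 / 2)
                  \<le> ereal lam * h v + ereal ((norm (v - w))\<^sup>2 / 2)"
  unfolding prox_def by (rule someI_ex[OF prox_exists[OF assms]])

lemma prox_finite:
  fixes h :: "'a::euclidean_space \<Rightarrow> ereal"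
  assumes hprop: "ext_proper h" and hclosed: "ext_closed h" and hconv: "ext_convex h"
    and lam: "lam > 0"
  shows "\<exists>r. h (prox lam h w) = ereal r"
proof -
  obtain x0 where x0: "h x0 \<noteq> \<infinity>" using hprop unfolding ext_proper_def by auto
  have "h x0 \<noteq> -\<infinity>" using hprop unfolding ext_proper_def by auto
  with x0 obtain r where r: "h x0 = ereal r" by (cases "h x0") auto
  have "ereal lam * h (prox lam h w) + ereal ((norm (prox lam h w - w))\<^sup>2 / 2)
                  \<le> ereal lam * h x0 + ereal ((norm (x0 - w))\<^sup>2 / 2)"
    using prox_min[OF assms] by blast
  hence "h (prox lam h w) \<noteq> \<infinity>" using r lam by auto
  moreover have "h (prox lam h w) \<noteq> -\<infinity>" using hprop unfolding ext_proper_def by auto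
  ultimately show ?thesis by (cases "h (prox lam h w)") auto
qed

lemma fundamental:
  fixes f :: "'a::euclidean_space \<Rightarrow> real" and h :: "'a \<Rightarrow> ereal"
  assumes fconv: "convex_on UNIV f"
    and fgrad: "\<And>z. (f has_derivative (\<lambda>v. inner (gradf z) v)) (at z)"
    and hprop: "ext_proper h" and hclosed: "ext_closed h" and hconv: "ext_convex h"
    and lam: "lam > 0" and ls: "LS f gradf h x lam"
    and hyp: "h (x - lam *\<^sub>R gradmap gradf h lam x) = ereal hy"
    and hz: "h z = ereal hz"
  shows "f (x - lam *\<^sub>R gradmap gradf h lam x) + hy + inner (gradmap gradf h lam x) (z - x)
          + lam / 2 * (norm (gradmap gradf h lam x))\<^sup>2 \<le> f z + hz"
proof -
  define G where "G = gradmap gradf h lam x"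
  define g where "g = gradf x"
  define w where "w = x - lam *\<^sub>R g"
  define p where "p = x - lam *\<^sub>R G"
  have pprox: "p = prox lam h w"
    unfolding p_def G_def gradmap_def w_def g_def using lam by simp
  have hp: "h p = ereal hy" using hyp unfolding p_def G_def .
  have i: "lam * hy \<le> lam * hz + inner (p - w) (z - p)"
    using prox_subgrad[OF hprop hconv lam prox_min[OF hprop hclosed hconv lam, of w] _ hz] hp pprox
    by simp
  have ii: "f z \<ge> f x + inner g (z - x)" unfolding g_def by (rule tangent_ineq[OF fconv fgrad])
  have lsG: "f (x - (2 * lam) *\<^sub>R G) \<le> f p - lam * inner G g + lam / 2 * (norm G)\<^sup>2"
    using ls unfolding LS_def G_def[symmetric] p_def g_def Let_def .
  have t1: "f (x - (2 * lam) *\<^sub>R G) \<ge> f p + inner (gradf p) ((x - (2 * lam) *\<^sub>R G) - p)"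
    by (rule tangent_ineq[OF fconv fgrad])
  have t2: "f x \<ge> f p + inner (gradf p) (x - p)"
    by (rule tangent_ineq[OF fconv fgrad])
  have e1: "(x - (2 * lam) *\<^sub>R G) - p = - (lam *\<^sub>R G)" unfolding p_def by (simp add: algebra_simps scaleR_2 flip: scaleR_add_left)
  have e2: "x - p = lam *\<^sub>R G" unfolding p_def by simp
  have iii: "f p \<le> f x - lam * inner G g + lam / 2 * (norm G)\<^sup>2"
    using t1 t2 lsG unfolding e1 e2 by (simp add: inner_commute)
  have e3: "inner (p - w) (z - p) = lam * (inner g (z - x) + lam * inner G g - inner G (z - x) - lam * (norm G)\<^sup>2)"
  proof -
    have "p - w = lam *\<^sub>R (g - G)" unfolding p_def w_def by (simp add: algebra_simps)
    moreover have "z - p = (z - x) + lam *\<^sub>R G" unfolding p_def by simp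
    ultimately have "inner (p - w) (z - p) = inner (lam *\<^sub>R (g - G)) ((z - x) + lam *\<^sub>R G)"
      by (simp only:)
    also have "\<dots> = lam * (inner g (z - x) + lam * inner G g - inner G (z - x) - lam * (norm G)\<^sup>2)"
      by (simp add: inner_diff_left inner_add_right inner_commute power2_norm_eq_inner algebra_simps)
    finally show ?thesis .
  qed
  have "hy \<le> hz + (inner g (z - x) + lam * inner G g - inner G (z - x) - lam * (norm G)\<^sup>2)"
    using i lam unfolding e3 by (simp add: mult_le_cancel_left_pos flip: distrib_left)
  with ii iii have "f p + hy + inner G (z - x) + lam / 2 * (norm G)\<^sup>2 \<le> f z + hz"
    by (simp add: inner_commute[of G g])
  thus ?thesis unfolding p_def G_def .
qed

lemma core:
  fixes t l Fk Fk1 Fs a b N :: real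
  assumes t: "t \<ge> 1" and l: "l > 0"
    and A: "Fk1 + a + l/2*N \<le> Fk" and B: "Fk1 + b + l/2*N \<le> Fs"
  shows "l*t\<^sup>2*(Fk1 - Fs) - l*(t\<^sup>2 - t)*(Fk - Fs) \<le> l*t*(-((t-1)*a + b)) - t\<^sup>2*l\<^sup>2*N/2"
proof -
  define s where "s = t - 1"
  have s: "s \<ge> 0" and ts: "t = s + 1" using t unfolding s_def by auto
  have P: "s*(Fk1 + a + l/2*N) \<le> s*Fk" using A s by (rule mult_left_mono)
  hence P': "s*Fk1 + s*a + s*(l/2*N) \<le> s*Fk" by (simp add: distrib_left)
  have D: "t*(Fk1 - Fs) - s*(Fk - Fs) \<le> -(s*a + b) - t*(l/2*N)"
  proof -
    have "t*(Fk1 - Fs) - s*(Fk - Fs) = s*Fk1 + Fk1 - Fs - s*Fk" unfolding ts by (simp add: algebra_simps)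
    moreover have "t*(l/2*N) = s*(l/2*N) + l/2*N" unfolding ts by (simp add: algebra_simps)
    ultimately show ?thesis using P' B by linarith
  qed
  have lt: "l * t \<ge> 0" using l t by simp
  from mult_left_mono[OF D lt]
  have "l*t*(t*(Fk1 - Fs) - s*(Fk - Fs)) \<le> l*t*(-(s*a + b) - t*(l/2*N))" .
  moreover have "l*t*(t*(Fk1 - Fs) - s*(Fk - Fs)) = l*t\<^sup>2*(Fk1 - Fs) - l*(t\<^sup>2 - t)*(Fk - Fs)"
    unfolding s_def by (simp add: algebra_simps power2_eq_square)
  moreover have "l*t*(-(s*a + b) - t*(l/2*N)) = l*t*(-((t-1)*a + b)) - t\<^sup>2*l\<^sup>2*N/2"
    unfolding s_def by (simp add: algebra_simps power2_eq_square)
  ultimately show ?thesis by simp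
qed

lemma beta_sq:
  fixes b :: real
  shows "((1 + sqrt (1 + 4 * b\<^sup>2)) / 2)\<^sup>2 - (1 + sqrt (1 + 4 * b\<^sup>2)) / 2 = b\<^sup>2"
proof -
  have "(sqrt (1 + 4 * b\<^sup>2))\<^sup>2 = 1 + 4 * b\<^sup>2" by (simp add: add_nonneg_nonneg)
  thus ?thesis by (simp add: power2_eq_square field_simps)
qed

theorem mainTheorem9:
  fixes f :: "'a::euclidean_space \<Rightarrow> real" and gradf :: "'a \<Rightarrow> 'a" and L :: real
    and h :: "'a \<Rightarrow> ereal" and xs :: 'a
    and lam beta :: "nat \<Rightarrow> real" and x y :: "nat \<Rightarrow> 'a"
  assumes fconv: "convex_on UNIV f"
    and fgrad: "\<And>z. (f has_derivative (\<lambda>v. inner (gradf z) v)) (at z)"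
    and flip: "\<And>z w. norm (gradf z - gradf w) \<le> L * norm (z - w)"
    and hprop: "ext_proper h" and hclosed: "ext_closed h" and hconv: "ext_convex h"
    and xsmin: "\<And>z. ereal (f xs) + h xs \<le> ereal (f z) + h z"
    and x1: "x 1 = y 1" and x1dom: "x 1 \<in> edom h"
    and lam0: "lam 0 > 0"
    and beta0: "beta 0 = 0" and beta1: "beta 1 = 1"
    and betaS: "\<And>k. k \<ge> 1 \<Longrightarrow> beta (k + 1) = (1 + sqrt (1 + 4 * (beta k)\<^sup>2)) / 2"
    and lamk: "\<And>k. k \<ge> 1 \<Longrightarrow> 0 < lam k \<and> lam k \<le> lam (k - 1) \<and> LS f gradf h (x k) (lam k)"
    and lammax: "\<And>k l. k \<ge> 1 \<Longrightarrow> 0 < l \<Longrightarrow> l \<le> lam (k - 1) \<Longrightarrow> LS f gradf h (x k) l \<Longrightarrow> l \<le> lam k"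
    and yS: "\<And>k. k \<ge> 1 \<Longrightarrow> y (k + 1) = x k - lam k *\<^sub>R gradmap gradf h (lam k) (x k)"
    and xS: "\<And>k. k \<ge> 1 \<Longrightarrow>
               x (k + 1) = y (k + 1) + ((beta k - 1) / beta (k + 1)) *\<^sub>R (y (k + 1) - y k)"
    and k: "k \<ge> 1"
  shows "ereal (lam k * (beta k)\<^sup>2) * ((ereal (f (y (k + 1))) + h (y (k + 1))) - (ereal (f xs) + h xs))
         - ereal (lam (k - 1) * (beta (k - 1))\<^sup>2) * ((ereal (f (y k)) + h (y k)) - (ereal (f xs) + h xs))
         \<le> ereal ((norm (beta k *\<^sub>R x k - (beta k - 1) *\<^sub>R y k - xs))\<^sup>2
                  - (norm (beta (k + 1) *\<^sub>R x (k + 1) - (beta (k + 1) - 1) *\<^sub>R y (k + 1) - xs))\<^sup>2) / 2"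
proof -
  have bge: "beta j \<ge> 1" if "j \<ge> 1" for j
    using that
  proof (induction j rule: nat_induct_at_least)
    case base thus ?case using beta1 by simp
  next
    case (Suc n)
    have s1: "sqrt (1 + 4 * (beta n)\<^sup>2) \<ge> 1" by simp
    have e: "beta (Suc n) = (1 + sqrt (1 + 4 * (beta n)\<^sup>2)) / 2" using betaS[OF Suc.hyps] by simp
    have gen: "1 \<le> (1 + s) / (2::real)" if "1 \<le> s" for s using that by simp
    show ?case unfolding e by (rule gen[OF s1])
  qed
  have bsq: "(beta j)\<^sup>2 - beta j = (beta (j - 1))\<^sup>2" if "j \<ge> 1" for j
  proof (cases "j = 1")
    case True thus ?thesis using beta0 beta1 by simp
  next
    case False
    define i where "i = j - 1"
    have i: "j = i + 1" "i \<ge> 1" using that False unfolding i_def by auto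
    have "(beta (i + 1))\<^sup>2 - beta (i + 1) = (beta i)\<^sup>2"
      unfolding betaS[OF i(2)] by (rule beta_sq)
    moreover have "j - 1 = i" using i by simp
    ultimately show ?thesis using i(1) by simp
  qed
  have yfin: "\<exists>r. h (y (j + 1)) = ereal r" if "j \<ge> 1" for j
  proof -
    have lp: "lam j > 0" using lamk[OF that] by simp
    have "y (j + 1) = prox (lam j) h (x j - lam j *\<^sub>R gradf (x j))"
      using yS[OF that] lp unfolding gradmap_def by simp
    thus ?thesis using prox_finite[OF hprop hclosed hconv lp] by simp
  qed
  obtain hk where hk: "h (y k) = ereal hk"
  proof (cases "k = 1")
    case True
    have "h (y 1) \<noteq> \<infinity>" using x1dom x1 unfolding edom_def by auto
    moreover have "h (y 1) \<noteq> -\<infinity>" using hprop unfolding ext_proper_def by auto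
    ultimately show ?thesis using that True by (cases "h (y 1)") auto
  next
    case False
    define i where "i = k - 1"
    have i: "k = i + 1" "i \<ge> 1" using k False unfolding i_def by auto
    show ?thesis using yfin[OF i(2)] that unfolding i by blast
  qed
  obtain hk1 where hk1: "h (y (k + 1)) = ereal hk1" using yfin[OF k] by blast
  obtain hs where hs: "h xs = ereal hs"
  proof -
    have "ereal (f xs) + h xs \<le> ereal (f (y k)) + h (y k)" by (rule xsmin)
    hence "h xs \<noteq> \<infinity>" using hk by auto
    moreover have "h xs \<noteq> -\<infinity>" using hprop unfolding ext_proper_def by auto
    ultimately show ?thesis using that by (cases "h xs") auto
  qed
  define t where "t = beta k"
  define l where "l = lam k"
  define l0 where "l0 = lam (k - 1)"
  define G where "G = gradmap gradf h l (x k)"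
  define N where "N = (norm G)\<^sup>2"
  define Fk where "Fk = f (y k) + hk"
  define Fk1 where "Fk1 = f (y (k + 1)) + hk1"
  define Fs where "Fs = f xs + hs"
  have t1: "t \<ge> 1" unfolding t_def using bge[OF k] .
  have lpos: "l > 0" and ll0: "l \<le> l0" and ls: "LS f gradf h (x k) l"
    using lamk[OF k] unfolding l_def l0_def by auto
  have yk1: "y (k + 1) = x k - l *\<^sub>R G" unfolding G_def l_def using yS[OF k] .
  have hyp: "h (x k - l *\<^sub>R gradmap gradf h l (x k)) = ereal hk1" using hk1 yk1 unfolding G_def by simp
  have A: "Fk1 + inner G (y k - x k) + l/2*N \<le> Fk"
    using fundamental[OF fconv fgrad hprop hclosed hconv lpos ls hyp hk]
    unfolding Fk1_def Fk_def N_def G_def[symmetric] yk1[symmetric] by simp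
  have B: "Fk1 + inner G (xs - x k) + l/2*N \<le> Fs"
    using fundamental[OF fconv fgrad hprop hclosed hconv lpos ls hyp hs]
    unfolding Fk1_def Fs_def N_def G_def[symmetric] yk1[symmetric] by simp
  have FkFs: "Fs \<le> Fk" using xsmin[of "y k"] hk hs unfolding Fk_def Fs_def by simp
  define uk where "uk = t *\<^sub>R x k - (t - 1) *\<^sub>R y k - xs"
  have uk1: "beta (k + 1) *\<^sub>R x (k + 1) - (beta (k + 1) - 1) *\<^sub>R y (k + 1) - xs = uk - (t * l) *\<^sub>R G"
  proof -
    have b1: "beta (k + 1) \<noteq> 0" using bge[of "k+1"] by simp
    have "beta (k + 1) *\<^sub>R x (k + 1) = beta (k + 1) *\<^sub>R y (k + 1) + (t - 1) *\<^sub>R (y (k + 1) - y k)"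
      using xS[OF k] b1 unfolding t_def by (simp add: scaleR_add_right)
    hence "beta (k + 1) *\<^sub>R x (k + 1) - (beta (k + 1) - 1) *\<^sub>R y (k + 1) - xs
         = t *\<^sub>R y (k + 1) - (t - 1) *\<^sub>R y k - xs" by (simp add: algebra_simps)
    also have "\<dots> = uk - (t * l) *\<^sub>R G" unfolding yk1 uk_def by (simp add: algebra_simps)
    finally show ?thesis .
  qed
  have cuk: "inner uk G = -((t - 1) * inner G (y k - x k) + inner G (xs - x k))"
  proof -
    have "uk = - ((t - 1) *\<^sub>R (y k - x k) + (xs - x k))" unfolding uk_def by (simp add: algebra_simps)
    hence "inner uk G = inner G (- ((t - 1) *\<^sub>R (y k - x k) + (xs - x k)))"
      by (simp only: inner_commute)
    also have "\<dots> = -((t - 1) * inner G (y k - x k) + inner G (xs - x k))"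
      by (simp only: inner_minus_right inner_add_right inner_scaleR_right)
    finally show ?thesis .
  qed
  have nrm: "(norm uk)\<^sup>2 - (norm (uk - (t * l) *\<^sub>R G))\<^sup>2 = 2 * (t * l) * inner uk G - (t * l)\<^sup>2 * N"
    using norm_add_scale_sq[of uk "-(t*l)" G] unfolding N_def by simp
  have C: "l*t\<^sup>2*(Fk1 - Fs) - l*(t\<^sup>2 - t)*(Fk - Fs) \<le> l*t*(-((t-1)*inner G (y k - x k) + inner G (xs - x k))) - t\<^sup>2*l\<^sup>2*N/2"
    by (rule core[OF t1 lpos A B])
  have tt: "t\<^sup>2 - t = (beta (k - 1))\<^sup>2" unfolding t_def using bsq[OF k] .
  have "l * (beta (k - 1))\<^sup>2 * (Fk - Fs) \<le> l0 * (beta (k - 1))\<^sup>2 * (Fk - Fs)"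
    using ll0 FkFs by (intro mult_right_mono) auto
  hence real: "l*t\<^sup>2*(Fk1 - Fs) - l0*(beta (k - 1))\<^sup>2*(Fk - Fs) \<le> ((norm uk)\<^sup>2 - (norm (uk - (t * l) *\<^sub>R G))\<^sup>2) / 2"
    using C unfolding tt nrm cuk[symmetric] by (simp add: power2_eq_square algebra_simps)
  show ?thesis
    using real unfolding uk1 uk_def[symmetric]
    unfolding t_def[symmetric] l_def[symmetric] l0_def[symmetric] hk hk1 hs
    by (simp add: Fk_def Fk1_def Fs_def uk_def)
qed

end
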